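(* Let $N\ge2$, $\lambda>0$, $\lambda'>0$, $\mu\in\mathbb R$, $\sigma>0$. Let $\Delta S_1\sim\mathcal N(\mu,\sigma^2)$ and $\hat\mu\sim\mathcal N(\mu,\sigma^2/N)$ be independent, and define $a_{\mathrm{plug\text{-}in}}:=\hat\mu/(\lambda\sigma^2)$ and $a_{\mathrm{u\text{-}a}}:=\frac{\lambda N}{\lambda N+\lambda'}a_{\mathrm{plug\text{-}in}}$. Then $\mathrm{MeanVar}_\lambda(a_{\mathrm{u\text{-}a}}\Delta S_1)>\mathrm{MeanVar}_\lambda(a_{\mathrm{plug\text{-}in}}\Delta S_1)$ if and only if \[ \mu^2\,\frac{(N-1)\lambda'-2N\lambda}{2N\lambda+\lambda'}<\sigma^2. \] In particular this holds whenever $\lambda'<\frac{2N}{N-1}\lambda$.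
   Context: $\mathrm{MeanVar}_\lambda(X):=\mathbb E[X]-\frac\lambda2\mathbb V[X]$, with expectation and variance under the joint law of $(\hat\mu,\Delta S_1)$; this is the out-of-sample performance measure. Here $\hat\mu$ is the sample-mean drift estimate from $N$ past i.i.d. $\mathcal N(\mu,\sigma^2)$ increments, $\Delta S_1$ the next increment, $a_{\mathrm{plug\text{-}in}}$ the plug-in policy and $a_{\mathrm{u\text{-}a}}$ the entropic uncertainty-aware policy (uncertainty aversion $\lambda'$) for the entropic objective with risk aversion $\lambda$, with the variance treated as known. *)

theory Defs
  imports "HOL-Probability.Probability"
begin

definition MeanVar :: "'a measure \<Rightarrow> real \<Rightarrow> ('a \<Rightarrow> real) \<Rightarrow> real" where
  "MeanVar M lam X =
     (integral\<^sup>L M X) - lam / 2 * (integral\<^sup>L M (\<lambda>w. (X w - integral\<^sup>L M X)\<^sup>2))"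

definition a_plugin :: "real \<Rightarrow> real \<Rightarrow> real \<Rightarrow> real" where
  "a_plugin lam sig muhat = muhat / (lam * sig\<^sup>2)"

definition a_ua :: "nat \<Rightarrow> real \<Rightarrow> real \<Rightarrow> real \<Rightarrow> real \<Rightarrow> real" where
  "a_ua N lam lam' sig muhat = (lam * real N) / (lam * real N + lam') * a_plugin lam sig muhat"

end

theory Submission
  imports Defs
begin

lemma aux: "(x::real) - y = p * q \<Longrightarrow> p > 0 \<Longrightarrow> (y < x \<longleftrightarrow> 0 < q)"
proof -
  assume a: "x - y = p * q" "p > 0"
  have "0 < p * q \<longleftrightarrow> 0 < q" using a(2) by (simp add: zero_less_mult_iff)
  then show ?thesis using a(1) by linarith
qed

lemma alg:
  fixes n lam lam' mu s :: real
  assumes n: "n \<ge> 2" and l: "lam > 0" and l': "lam' > 0" and s: "s > 0"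
  defines "A \<equiv> mu\<^sup>2" and "V \<equiv> (mu\<^sup>2 + s\<^sup>2 / n) * (mu\<^sup>2 + s\<^sup>2) - (mu\<^sup>2)\<^sup>2"
  defines "c \<equiv> lam * n / (lam * n + lam')"
  defines "MV \<equiv> \<lambda>k. k * A - lam / 2 * k\<^sup>2 * V"
  shows "(MV (c / (lam * s\<^sup>2)) > MV (1 / (lam * s\<^sup>2)))
     \<longleftrightarrow> mu\<^sup>2 * (((n - 1) * lam' - 2 * n * lam) / (2 * n * lam + lam')) < s\<^sup>2"
proof -
  define B where "B = (A * (n + 1) + s\<^sup>2) / n"
  have VB: "V = B * s\<^sup>2" using n unfolding V_def B_def A_def by (simp add: field_simps power2_eq_square)
  have pn: "lam * n > 0" using l n by simp
  have c1: "c < 1" "c > 0" using pn l' unfolding c_def by (auto simp: divide_less_eq)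
  have "MV (c / (lam * s\<^sup>2)) - MV (1 / (lam * s\<^sup>2)) = (1 - c) / (lam * s\<^sup>2) * ((1 + c) / 2 * B - A)"
    unfolding MV_def VB using l s by (simp add: field_simps power2_eq_square)
  moreover have "0 < (1 - c) / (lam * s\<^sup>2)" using c1 l s by simp
  ultimately have "(MV (c / (lam * s\<^sup>2)) > MV (1 / (lam * s\<^sup>2))) \<longleftrightarrow> (1 + c) / 2 * B - A > 0"
    using aux by blast
  also have "\<dots> \<longleftrightarrow> (2 * lam * n + lam') * (A * (n + 1) + s\<^sup>2) > 2 * A * n * (lam * n + lam')"
  proof -
    have "(1 + c) / 2 * B - A = ((2 * lam * n + lam') * (A * (n + 1) + s\<^sup>2) - 2 * A * n * (lam * n + lam')) / (2 * n * (lam * n + lam'))"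
      proof -
      have d1: "lam * n + lam' \<noteq> 0" "n \<noteq> 0" using pn l' n by auto
      have d2: "lam' * (n * 2) + lam * (n * (n * 2)) \<noteq> 0" 
      proof -
        have "lam' * (n * 2) + lam * (n * (n * 2)) = (2 * n) * (lam * n + lam')" by (simp add: algebra_simps)
        moreover have "(2 * n) * (lam * n + lam') > 0" using pn l' n by simp
        ultimately show ?thesis by (metis less_irrefl)
      qed
      show ?thesis unfolding c_def B_def using d1 d2 by (simp add: field_simps)
    qed
    moreover have "2 * n * (lam * n + lam') > 0" using pn l' n by simp
    ultimately show ?thesis by (simp add: zero_less_divide_iff)
  qed
  also have "\<dots> \<longleftrightarrow> A * ((n - 1) * lam' - 2 * n * lam) < (2 * n * lam + lam') * s\<^sup>2"
    by (simp add: algebra_simps)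
  also have "\<dots> \<longleftrightarrow> mu\<^sup>2 * (((n - 1) * lam' - 2 * n * lam) / (2 * n * lam + lam')) < s\<^sup>2"
  proof -
    have p: "2 * n * lam + lam' > 0" using pn l' by (simp add: mult.commute mult.left_commute)
    show ?thesis unfolding A_def using p
      by (simp add: pos_divide_less_eq mult.commute mult.left_commute)
  qed
  finally show ?thesis .
qed
lemma (in prob_space) normal_moments:
  assumes s: "0 < s" and D: "distributed M lborel X (normal_density m s)"
  shows "integrable M X" "integrable M (\<lambda>w. (X w)\<^sup>2)" "expectation X = m"
    "expectation (\<lambda>w. (X w)\<^sup>2) = m\<^sup>2 + s\<^sup>2"
proof -
  have rv: "X \<in> borel_measurable M" using D by (auto simp: distributed_def)
  show i1: "integrable M X"
    using distributed_integrable[OF D, of "\<lambda>x. x"] integrable_normal_moment_nz_1[OF s] by simp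
  show e1: "expectation X = m" using normal_distributed_expectation[OF s D] .
  have v: "expectation (\<lambda>w. (X w - m)\<^sup>2) = s\<^sup>2" using normal_distributed_variance[OF s D] e1 by simp
  have i2: "integrable M (\<lambda>w. (X w - m)\<^sup>2)"
    using v s not_integrable_integral_eq by fastforce
  have eq: "(\<lambda>w. (X w)\<^sup>2) = (\<lambda>w. (X w - m)\<^sup>2 + 2 * m * X w - m\<^sup>2)"
    by (auto simp: power2_eq_square algebra_simps)
  show "integrable M (\<lambda>w. (X w)\<^sup>2)" unfolding eq using i1 i2 by auto
  show "expectation (\<lambda>w. (X w)\<^sup>2) = m\<^sup>2 + s\<^sup>2" unfolding eq using i1 i2 v e1
    by (simp add: power2_eq_square prob_space)
qed

lemma (in prob_space) meanvar_scale:
  assumes i1: "integrable M Z" and i2: "integrable M (\<lambda>w. (Z w)\<^sup>2)"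
  shows "MeanVar M lam (\<lambda>w. k * Z w) = k * expectation Z
     - lam / 2 * k\<^sup>2 * (expectation (\<lambda>w. (Z w)\<^sup>2) - (expectation Z)\<^sup>2)"
proof -
  define E where "E = expectation Z"
  have eq: "(\<lambda>w. (k * Z w - k * E)\<^sup>2) = (\<lambda>w. k\<^sup>2 * (Z w)\<^sup>2 - (2 * k\<^sup>2 * E) * Z w + k\<^sup>2 * E\<^sup>2)"
    by (auto simp: power2_eq_square algebra_simps)
  show ?thesis unfolding MeanVar_def integral_mult_right_zero E_def[symmetric] eq
    using i1 i2 by (simp add: prob_space power2_eq_square algebra_simps E_def)
qed

theorem lemmaB5:
  fixes M :: "'a measure" and N :: nat and lam lam' mu sig :: real
    and muhat dS :: "'a \<Rightarrow> real"
  assumes "prob_space M"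
    and "N \<ge> 2" and "lam > 0" and "lam' > 0" and "sig > 0"
    and "distributed M lborel dS (normal_density mu sig)"
    and "distributed M lborel muhat (normal_density mu (sig / sqrt (real N)))"
    and "prob_space.indep_var M borel dS borel muhat"
  shows "((MeanVar M lam (\<lambda>w. a_ua N lam lam' sig (muhat w) * dS w)
            > MeanVar M lam (\<lambda>w. a_plugin lam sig (muhat w) * dS w))
          \<longleftrightarrow> mu\<^sup>2 * (((real N - 1) * lam' - 2 * real N * lam) / (2 * real N * lam + lam')) < sig\<^sup>2)
         \<and> (lam' < 2 * real N / (real N - 1) * lam \<longrightarrow>
          MeanVar M lam (\<lambda>w. a_ua N lam lam' sig (muhat w) * dS w)
            > MeanVar M lam (\<lambda>w. a_plugin lam sig (muhat w) * dS w))"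
proof -
  interpret prob_space M by fact
  have n2: "real N \<ge> 2" using assms(2) by simp
  have sN: "sig / sqrt (real N) > 0" using assms(5) n2 by simp
  have sN2: "(sig / sqrt (real N))\<^sup>2 = sig\<^sup>2 / real N" using n2 by (simp add: power_divide)
  note D = normal_moments[OF assms(5) assms(6)]
  note H = normal_moments[OF sN assms(7), unfolded sN2]
  have ind: "indep_var borel dS borel muhat" using assms(8) .
  define Z where "Z w = muhat w * dS w" for w
  have ZE: "(\<lambda>w. Z w) = (\<lambda>w. dS w * muhat w)" by (auto simp: Z_def)
  have iZ: "integrable M Z" using indep_var_integrable[OF ind D(1) H(1)] ZE by metis
  have eZ: "expectation Z = mu\<^sup>2"
    using indep_var_lebesgue_integral[OF ind D(1) H(1)] ZE D(3) H(3) by (simp add: power2_eq_square)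
  have ind2: "indep_var borel ((\<lambda>x. x\<^sup>2) \<circ> dS) borel ((\<lambda>x. x\<^sup>2) \<circ> muhat)"
    by (rule indep_var_compose[OF ind]) auto
  have Z2E: "(\<lambda>w. (Z w)\<^sup>2) = (\<lambda>w. ((\<lambda>x. x\<^sup>2) \<circ> dS) w * ((\<lambda>x. x\<^sup>2) \<circ> muhat) w)"
    by (auto simp: Z_def power_mult_distrib)
  have i2a: "integrable M ((\<lambda>x. x\<^sup>2) \<circ> dS)" "integrable M ((\<lambda>x. x\<^sup>2) \<circ> muhat)"
    using D(2) H(2) by (simp_all add: comp_def)
  have iZ2: "integrable M (\<lambda>w. (Z w)\<^sup>2)" unfolding Z2E using indep_var_integrable[OF ind2 i2a] .
  have eZ2: "expectation (\<lambda>w. (Z w)\<^sup>2) = (mu\<^sup>2 + sig\<^sup>2 / real N) * (mu\<^sup>2 + sig\<^sup>2)"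
    unfolding Z2E using indep_var_lebesgue_integral[OF ind2 i2a] D(4) H(4)
    by (simp add: comp_def mult.commute)
  define c where "c = lam * real N / (lam * real N + lam')"
  have f1: "(\<lambda>w. a_ua N lam lam' sig (muhat w) * dS w) = (\<lambda>w. (c / (lam * sig\<^sup>2)) * Z w)"
    by (auto simp: a_ua_def a_plugin_def c_def Z_def)
  have f2: "(\<lambda>w. a_plugin lam sig (muhat w) * dS w) = (\<lambda>w. (1 / (lam * sig\<^sup>2)) * Z w)"
    by (auto simp: a_plugin_def Z_def)
  have main: "(MeanVar M lam (\<lambda>w. a_ua N lam lam' sig (muhat w) * dS w)
            > MeanVar M lam (\<lambda>w. a_plugin lam sig (muhat w) * dS w))
          \<longleftrightarrow> mu\<^sup>2 * (((real N - 1) * lam' - 2 * real N * lam) / (2 * real N * lam + lam')) < sig\<^sup>2"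
    unfolding f1 f2 meanvar_scale[OF iZ iZ2] eZ eZ2 c_def
    using alg[OF n2 assms(3) assms(4) assms(5), of mu] by simp
  moreover have "lam' < 2 * real N / (real N - 1) * lam \<longrightarrow>
      mu\<^sup>2 * (((real N - 1) * lam' - 2 * real N * lam) / (2 * real N * lam + lam')) < sig\<^sup>2"
  proof
    assume a: "lam' < 2 * real N / (real N - 1) * lam"
    have "(real N - 1) * lam' < 2 * real N * lam"
      using a n2 by (simp add: field_simps)
    moreover have "2 * real N * lam + lam' > 0"
    proof -
      have "real N * lam > 0" using n2 assms(3) by simp
      then show ?thesis using assms(4) by linarith
    qed
    ultimately have "((real N - 1) * lam' - 2 * real N * lam) / (2 * real N * lam + lam') \<le> 0"
      by (simp add: divide_nonpos_pos)
    then have "mu\<^sup>2 * (((real N - 1) * lam' - 2 * real N * lam) / (2 * real N * lam + lam')) \<le> 0"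
      using mult_nonneg_nonpos zero_le_power2 by blast
    then show "mu\<^sup>2 * (((real N - 1) * lam' - 2 * real N * lam) / (2 * real N * lam + lam')) < sig\<^sup>2"
      using assms(5) by (smt (verit) zero_less_power)
  qed
  ultimately show ?thesis by blast
qed

end
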